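(* The matrix $J^{-1}(s^* )$ satisfies $|J^{-1}_{11}(s^* )|\ge\frac13$, and $J^{-1}_{ii}(s^* )<0$ for all $i=1,\dots,b$.
   Context: Let $N\ge1$, $\gamma\in(0,1]$, $\alpha>0$, $\lambda=1-\gamma/N^\alpha$, and $b\ge1$ an integer. The mean-field vector field is $f_k(s)=\lambda(s_{k-1}^2-s_k^2)-(s_k-s_{k+1})$, $k=1,\dots,b$, with $s_0=1,s_{b+1}=0$; $s^*$ is its unique equilibrium in $\{s\in\mathbb R^b:1\ge s_1\ge\cdots\ge s_b\ge0\}$. $J(s^* )$ is the $b\times b$ tridiagonal Jacobian of $f$ at $s^*$ with $J_{kk}=-2\lambda s^*_k-1$, $J_{k,k+1}=1$, $J_{k+1,k}=2\lambda s^*_k$; it is invertible. *)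

theory Defs
  imports "Jordan_Normal_Form.Matrix"
begin

text \<open>A state is a function s :: nat => real, of which only the entries s 1, ..., s b matter.
  The boundary convention s_0 = 1, s_(b+1) = 0 is built in by sext.\<close>
definition sext :: "nat \<Rightarrow> (nat \<Rightarrow> real) \<Rightarrow> nat \<Rightarrow> real" where
  "sext b s k = (if k = 0 then 1 else if k = b + 1 then 0 else s k)"

definition mf_field :: "real \<Rightarrow> nat \<Rightarrow> (nat \<Rightarrow> real) \<Rightarrow> nat \<Rightarrow> real" where
  "mf_field lam b s k =
     lam * ((sext b s (k - 1))\<^sup>2 - (sext b s k)\<^sup>2) - (sext b s k - sext b s (k + 1))"

text \<open>Jacobian of f at s, as a b x b matrix; the 0-based matrix index i corresponds
  to the 1-based index k = i + 1 of the paper.\<close>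
definition jac :: "real \<Rightarrow> nat \<Rightarrow> (nat \<Rightarrow> real) \<Rightarrow> real mat" where
  "jac lam b s = mat b b (\<lambda>(i, j).
      if i = j then - 2 * lam * s (i + 1) - 1
      else if j = i + 1 then 1
      else if i = j + 1 then 2 * lam * s (j + 1)
      else 0)"

end

theory Submission
  imports Defs
begin

lemma row_eq:
  assumes "Jinv \<in> carrier_mat b b" "j < b" "i < b"
  shows "(Jinv * jac lam b s) $$ (i,j) = (if 0<j then Jinv$$(i,j-1) else 0)
     - (2*lam*s(j+1)+1)*Jinv$$(i,j) + (if j+1<b then 2*lam*s(j+1)*Jinv$$(i,j+1) else 0)"
proof -
  have "(Jinv * jac lam b s) $$ (i,j) = (\<Sum>k<b. Jinv$$(i,k) * jac lam b s $$ (k,j))"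
    using assms by (auto simp: scalar_prod_def jac_def lessThan_atLeast0 intro!: sum.cong)
  also have "\<dots> = (\<Sum>k<b. (if 0<j \<and> k = j-1 then Jinv$$(i,j-1) else 0)
      + (if k = j then - (2*lam*s(j+1)+1)*Jinv$$(i,j) else 0)
      + (if k = j+1 then 2*lam*s(j+1)*Jinv$$(i,j+1) else 0))"
    using assms by (intro sum.cong) (auto simp: jac_def)
  also have "\<dots> = (if 0<j then Jinv$$(i,j-1) else 0)
     - (2*lam*s(j+1)+1)*Jinv$$(i,j) + (if j+1<b then 2*lam*s(j+1)*Jinv$$(i,j+1) else 0)"
    using assms by (auto simp: sum.distrib algebra_simps)
  finally show ?thesis .
qed

lemma maxprin:
  fixes u a :: "nat \<Rightarrow> real"
  assumes "\<forall>j<b. a j \<ge> 0"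
    and "\<forall>j<b. (1 + a j) * u j - (if 0<j then u (j-1) else 0) - (if j+1<b then a j * u (j+1) else 0) \<ge> 0"
  shows "\<forall>j<b. u j \<ge> 0"
proof (rule ccontr)
  assume "\<not> ?thesis"
  then obtain j where j: "j < b" "u j < 0" by auto
  define mv where "mv = Min (u ` {..<b})"
  have fin: "finite (u ` {..<b})" and ne: "u ` {..<b} \<noteq> {}" using j by auto
  have mvle: "\<And>k. k < b \<Longrightarrow> mv \<le> u k" unfolding mv_def using fin by auto
  have "mv \<in> u ` {..<b}" unfolding mv_def using fin ne by (rule Min_in)
  then obtain k0 where k0: "k0 < b" "u k0 = mv" by auto
  define m where "m = (LEAST k. k < b \<and> u k = mv)"
  have m: "m < b" "u m = mv" unfolding m_def using k0 by (metis (mono_tags, lifting) LeastI)+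
  have mmin: "\<And>k. k < m \<Longrightarrow> u k \<noteq> mv" unfolding m_def using k0
    by (metis (mono_tags, lifting) m(1) m_def not_less_Least order.strict_trans)
  have neg: "mv < 0" using mvle[OF j(1)] j by auto
  have A: "(1 + a m) * u m - (if 0<m then u (m-1) else 0) - (if m+1<b then a m * u (m+1) else 0) \<ge> 0"
    using assms(2) m by auto
  have am: "a m \<ge> 0" using assms(1) m by auto
  have B: "(if m+1<b then a m * (u m - u (m+1)) else a m * u m) \<le> 0"
    using mvle[of "m+1"] m am neg by (auto simp: mult_nonneg_nonpos)
  show False
  proof (cases "m = 0")
    case True
    then show ?thesis using A B m neg by (auto split: if_splits simp: algebra_simps)
  next
    case False
    have "u (m-1) > mv" using mvle[of "m-1"] mmin[of "m-1"] m False by force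
    then show ?thesis using A B m False by (auto split: if_splits simp: algebra_simps)
  qed
qed

theorem lemma8:
  fixes N b :: nat and \<gamma> \<alpha> lam :: real and s :: "nat \<Rightarrow> real" and Jinv :: "real mat"
  assumes "N \<ge> 1" and "0 < \<gamma>" and "\<gamma> \<le> 1" and "\<alpha> > 0"
    and "lam = 1 - \<gamma> / (real N powr \<alpha>)"
    and "b \<ge> 1"
    and "s 1 \<le> 1" and "\<forall>k. 1 \<le> k \<and> k < b \<longrightarrow> s (k + 1) \<le> s k" and "s b \<ge> 0"
    and "\<forall>k. 1 \<le> k \<and> k \<le> b \<longrightarrow> mf_field lam b s k = 0"
    and "Jinv \<in> carrier_mat b b"
    and "jac lam b s * Jinv = 1\<^sub>m b" and "Jinv * jac lam b s = 1\<^sub>m b"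
  shows "\<bar>Jinv $$ (0, 0)\<bar> \<ge> 1 / 3 \<and> (\<forall>i < b. Jinv $$ (i, i) < 0)"
proof -
  have Np: "real N powr \<alpha> \<ge> 1" using assms(1,4) by (simp add: ge_one_powr_ge_zero)
  have g1: "\<gamma> / (real N powr \<alpha>) \<le> 1" using Np assms(2,3) by (simp add: divide_le_eq)
  have g0: "\<gamma> / (real N powr \<alpha>) > 0" using Np assms(1,2) by (intro divide_pos_pos) auto
  have lam0: "lam \<ge> 0" and lam1: "lam < 1" using g1 g0 assms(5) by auto
  have spos: "\<And>k. 1 \<le> k \<Longrightarrow> k \<le> b \<Longrightarrow> s k \<ge> 0"
  proof -
    fix k assume "1 \<le> k" "k \<le> b"
    then show "s k \<ge> 0"
    proof (induction "b - k" arbitrary: k)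
      case 0 then show ?case using assms(9) by (metis diff_is_0_eq le_antisym)
    next
      case (Suc d)
      then have "s (k+1) \<ge> 0" by auto
      moreover have "s (k+1) \<le> s k" using assms(8) Suc by auto
      ultimately show ?case by linarith
    qed
  qed
  define a where "a j = 2*lam*s(j+1)" for j
  have a0: "\<forall>j<b. a j \<ge> 0" using spos lam0 by (auto simp: a_def)
  have a1: "a 0 < 2"
  proof -
    have "lam * s 1 \<le> lam" using assms(7) lam0 by (simp add: mult_left_le)
    then show ?thesis using lam1 by (simp add: a_def)
  qed
  have rowI: "\<And>i j. i < b \<Longrightarrow> j < b \<Longrightarrow> (if 0<j then Jinv$$(i,j-1) else 0)
     - (1 + a j)*Jinv$$(i,j) + (if j+1<b then a j*Jinv$$(i,j+1) else 0) = (if i = j then 1 else 0)"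
  proof -
    fix i j assume ij: "i < b" "j < b"
    have "(Jinv * jac lam b s) $$ (i,j) = (if i = j then 1 else 0)" using assms(13) ij by simp
    moreover note row_eq[OF assms(11) ij(2,1), of lam s]
    moreover have "1 + a j = 2*lam*s(j+1)+1" by (simp add: a_def)
    moreover have "a j = 2*lam*s(j+1)" by (simp add: a_def)
    ultimately show "?thesis i j" by metis
  qed
  have nonpos: "\<And>i j. i < b \<Longrightarrow> j < b \<Longrightarrow> Jinv $$ (i,j) \<le> 0"
  proof -
    fix i j assume ij: "i < b" "j < b"
    have "\<forall>j<b. (1 + a j) * (- Jinv$$(i,j)) - (if 0<j then - Jinv$$(i,j-1) else 0)
        - (if j+1<b then a j * (- Jinv$$(i,j+1)) else 0) \<ge> 0"
    proof (intro allI impI)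
      fix j assume "j < b"
      from rowI[OF ij(1) this] show "(1 + a j) * (- Jinv$$(i,j)) - (if 0<j then - Jinv$$(i,j-1) else 0)
        - (if j+1<b then a j * (- Jinv$$(i,j+1)) else 0) \<ge> 0"
        by (auto split: if_splits simp: algebra_simps)
    qed
    from maxprin[OF a0 this] ij show "Jinv $$ (i,j) \<le> 0" by auto
  qed
  have diag: "\<And>i. i < b \<Longrightarrow> (1 + a i) * (- Jinv $$ (i,i)) \<ge> 1"
  proof -
    fix i assume i: "i < b"
    have e: "(if 0<i then Jinv$$(i,i-1) else 0)
     - (1 + a i)*Jinv$$(i,i) + (if i+1<b then a i*Jinv$$(i,i+1) else 0) = 1"
      using rowI[OF i i] by simp
    have "(if 0<i then Jinv$$(i,i-1) else 0) \<le> 0" using nonpos i by auto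
    moreover have "(if i+1<b then a i*Jinv$$(i,i+1) else 0) \<le> 0"
      using nonpos[of i "i+1"] a0 i by (auto simp: mult_nonneg_nonpos)
    ultimately show "(1 + a i) * (- Jinv $$ (i,i)) \<ge> 1" using e by (simp add: algebra_simps)
  qed
  have neg: "\<forall>i<b. Jinv $$ (i,i) < 0"
  proof (intro allI impI)
    fix i assume i: "i < b"
    have "Jinv $$ (i,i) \<noteq> 0" using diag[OF i] by auto
    then show "Jinv $$ (i,i) < 0" using nonpos[OF i i] by auto
  qed
  have b0: "0 < b" using assms(6) by simp
  have d0: "(1 + a 0) * (- Jinv $$ (0,0)) \<ge> 1" using diag[OF b0] .
  have "- Jinv $$ (0,0) \<ge> 1/3"
  proof (rule ccontr)
    assume "\<not> ?thesis"
    then have "- Jinv $$ (0,0) < 1/3" by simp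
    moreover have "- Jinv $$ (0,0) \<ge> 0" using nonpos[OF b0 b0] by simp
    ultimately have "(1 + a 0) * (- Jinv $$ (0,0)) < 3 * (1/3)"
      using a1 a0 b0 by (intro mult_strict_mono') auto
    then show False using d0 by simp
  qed
  then show ?thesis using neg by simp
qed

end
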